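(* For every $d\ge0$ there exists $\beta=\beta(d)$ such that for all integers $n\ge \max(1,d)$ and $k\ge 2$, and every $\delta\ge 1+1/\ln k$ such that $\delta k$ is an integer, if $G_n\sim G(n,d/n)$ then $$\Pr\big[s_k(G_n,\delta k)\ge \beta^k\big]\le 2^{-k}.$$
   Context: $G(n,p)$ is the random graph on $[n]$ with each edge present independently with probability $p$. For a graph $G$, $k\ge1$ and $j\ge0$, $s_k(G,j)$ is the number of unlabeled (isomorphism classes of) subgraphs of $G$ with exactly $k$ vertices and $j$ edges. *)

theory Defs
  imports "HOL-Probability.Probability"
begin

text \<open>Vertex set [n] = {1..n}; a graph on [n] is given by its edge set,
  a set of 2-element subsets of [n].\<close>

definition all_pairs :: "nat \<Rightarrow> nat set set" where
  "all_pairs n = {e. e \<subseteq> {1..n} \<and> card e = 2}"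

definition gnp :: "nat \<Rightarrow> real \<Rightarrow> nat set set pmf" where
  "gnp n p = map_pmf (\<lambda>f. {e \<in> all_pairs n. f e})
                     (Pi_pmf (all_pairs n) False (\<lambda>_. bernoulli_pmf p))"

definition subgraphs_kj :: "nat \<Rightarrow> nat set set \<Rightarrow> nat \<Rightarrow> nat \<Rightarrow> (nat set \<times> nat set set) set" where
  "subgraphs_kj n E k j = {(W, F). W \<subseteq> {1..n} \<and> card W = k \<and> F \<subseteq> E \<and>
       (\<forall>e\<in>F. e \<subseteq> W) \<and> card F = j}"

definition graph_iso :: "(nat set \<times> nat set set) \<Rightarrow> (nat set \<times> nat set set) \<Rightarrow> bool" where
  "graph_iso H H' = (\<exists>f. bij_betw f (fst H) (fst H') \<and> (\<lambda>e. f ` e) ` (snd H) = snd H')"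

definition s_count :: "nat \<Rightarrow> nat set set \<Rightarrow> nat \<Rightarrow> nat \<Rightarrow> nat" where
  "s_count n E k j = card (subgraphs_kj n E k j //
      {(H, H'). H \<in> subgraphs_kj n E k j \<and> H' \<in> subgraphs_kj n E k j \<and> graph_iso H H'})"

end

theory Submission
  imports Defs
begin


lemma exp_term_le: assumes "(y::real) \<ge> 0" shows "y ^ m / fact m \<le> exp y"
proof -
  have s: "summable (\<lambda>n. inverse (fact n) * y ^ n)" by (rule summable_exp)
  have "(\<Sum>n\<in>{m}. inverse (fact n) * y ^ n) \<le> (\<Sum>n. inverse (fact n) * y ^ n)"
    by (rule sum_le_suminf[OF s]) (use assms in auto)
  moreover have "exp y = (\<Sum>n. inverse (fact n) * y ^ n)"
    using exp_converges[of y] by (simp add: sums_iff field_simps)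
  ultimately show ?thesis by (simp add: field_simps)
qed

lemma choose_le_pow_fact: "real (N choose j) \<le> real N ^ j / fact j"
proof (cases "j \<le> N")
  case True
  have e: "fact N = ((N choose j) * fact j) * (fact (N - j) :: nat)"
    using binomial_fact_lemma[OF True] by (simp add: ac_simps)
  have "(N choose j) * fact j = (fact N :: nat) div fact (N - j)"
    by (subst e) simp
  also have "\<dots> \<le> N ^ j" using fact_div_fact_le_pow[OF True] .
  finally have "real ((N choose j) * fact j) \<le> real (N ^ j)" by linarith
  hence "real (N choose j) * fact j \<le> real N ^ j" by simp
  thus ?thesis by (simp add: field_simps)
next
  case False
  hence "N choose j = 0" by (simp add: binomial_eq_0)
  hence z: "real (N choose j) = 0" by (simp only: of_nat_0)
  have "real N ^ j / fact j \<ge> 0" by simp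
  with z show ?thesis by linarith
qed



definition Sset :: "nat \<Rightarrow> nat \<Rightarrow> nat \<Rightarrow> (nat set \<times> nat set set) set" where
  "Sset n k j = {(W, F). W \<subseteq> {1..n} \<and> card W = k \<and> F \<subseteq> {e. e \<subseteq> W \<and> card e = 2} \<and> card F = j}"

lemma finite_Sset: "finite (Sset n k j)"
proof (rule finite_subset)
  show "Sset n k j \<subseteq> Pow {1..n} \<times> Pow (Pow {1..n})" unfolding Sset_def by auto
qed auto

lemma card_Sset: "card (Sset n k j) = (n choose k) * ((k choose 2) choose j)"
proof -
  define A where "A = {W. W \<subseteq> {1..n} \<and> card W = k}"
  define B where "B = (\<lambda>W::nat set. {F. F \<subseteq> {e. e \<subseteq> W \<and> card e = 2} \<and> card F = j})"
  have eq: "Sset n k j = Sigma A B" unfolding Sset_def A_def B_def by auto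
  have fA: "finite A" unfolding A_def by (rule finite_subset[of _ "Pow {1..n}"]) auto
  have cB: "card (B W) = (k choose 2) choose j" if "W \<in> A" for W
  proof -
    have fW: "finite W" using that unfolding A_def using finite_subset by blast
    have "card {e. e \<subseteq> W \<and> card e = 2} = k choose 2"
      using n_subsets[OF fW, of 2] that unfolding A_def by simp
    moreover have "finite {e. e \<subseteq> W \<and> card e = 2}" using fW by simp
    ultimately show ?thesis unfolding B_def using n_subsets by metis
  qed
  have fB: "finite (B W)" if "W \<in> A" for W
  proof -
    have fW: "finite W" using that unfolding A_def using finite_subset by blast
    show ?thesis unfolding B_def by (rule finite_subset[of _ "Pow (Pow W)"]) (use fW in auto)
  qed
  have "card (Sigma A B) = (\<Sum>W\<in>A. card (B W))" using fA fB by simp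
  also have "\<dots> = (\<Sum>W\<in>A. (k choose 2) choose j)" using cB by simp
  also have "card A = n choose k" unfolding A_def using n_subsets[of "{1..n}" k] by simp
  hence "(\<Sum>W\<in>A. (k choose 2) choose j) = (n choose k) * ((k choose 2) choose j)" by simp
  finally show ?thesis using eq by simp
qed

lemma sub_eq: "E \<subseteq> all_pairs n \<Longrightarrow> subgraphs_kj n E k j = {x \<in> Sset n k j. snd x \<subseteq> E}"
  unfolding subgraphs_kj_def Sset_def all_pairs_def by auto

lemma card_quotient_le': "finite A \<Longrightarrow> card (A // r) \<le> card A"
proof -
  assume "finite A"
  have "A // r = (\<lambda>x. r `` {x}) ` A" unfolding quotient_def by auto
  thus ?thesis using card_image_le[OF \<open>finite A\<close>] by simp
qed

lemma finite_all_pairs: "finite (all_pairs n)"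
  unfolding all_pairs_def by (rule finite_subset[of _ "Pow {1..n}"]) auto

lemma set_gnp: "E \<in> set_pmf (gnp n p) \<Longrightarrow> E \<subseteq> all_pairs n"
  unfolding gnp_def by auto

lemma prob_sub:
  assumes F: "F \<subseteq> all_pairs n" and p: "0 \<le> p" "p \<le> 1"
  shows "measure_pmf.prob (gnp n p) {E. F \<subseteq> E} = p ^ card F"
proof -
  have pre: "(\<lambda>f. {e \<in> all_pairs n. f e}) -` {E. F \<subseteq> E}
      = Pi (all_pairs n) (\<lambda>e. if e \<in> F then {True} else UNIV)"
    using F by (auto simp: Pi_def)
  have "measure_pmf.prob (gnp n p) {E. F \<subseteq> E}
      = (\<Prod>e\<in>all_pairs n. measure_pmf.prob (bernoulli_pmf p) (if e \<in> F then {True} else UNIV))"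
    unfolding gnp_def measure_map_pmf pre
    by (rule measure_Pi_pmf_Pi[OF finite_all_pairs])
  also have "\<dots> = (\<Prod>e\<in>all_pairs n. if e \<in> F then p else 1)"
    using p by (intro prod.cong) (auto simp: measure_pmf_single)
  also have "\<dots> = p ^ card F"
    using F finite_all_pairs[of n] by (simp add: prod.If_cases Int_absorb1)
  finally show ?thesis .
qed



lemma main_ineq:
  assumes kn: "k \<le> n" and kj: "k \<le> j" and d0: "0 \<le> d" and dn: "d \<le> real n" and k1: "1 \<le> k"
  shows "real (n choose k) * real ((k choose 2) choose j) * (d / real n) ^ j
         \<le> exp (real k) * exp (d * real k / 2)"
proof -
  have n0: "real n > 0" using kn k1 by simp
  have K: "real (k choose 2) \<le> real k ^ 2 / 2"
  proof -
    have "real (k choose 2) = real (k * (k - 1) div 2)" by (simp add: choose_two)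
    also have "\<dots> \<le> real (k * (k - 1)) / 2" using of_nat_div_le_of_nat[of "k * (k - 1)" 2] by simp
    also have "\<dots> \<le> real k ^ 2 / 2"
    proof -
      have "k * (k - 1) \<le> k * k" by simp
      hence "real (k * (k - 1)) \<le> real k ^ 2" by (metis of_nat_le_iff of_nat_mult power2_eq_square)
      thus ?thesis by simp
    qed
    finally show ?thesis .
  qed
  have h1: "real (n choose k) \<le> real n ^ k / fact k" by (rule choose_le_pow_fact)
  have h2: "real ((k choose 2) choose j) \<le> (real k ^ 2 / 2) ^ j / fact j"
  proof -
    have "real ((k choose 2) choose j) \<le> real (k choose 2) ^ j / fact j" by (rule choose_le_pow_fact)
    also have "\<dots> \<le> (real k ^ 2 / 2) ^ j / fact j"
      by (intro divide_right_mono power_mono K) auto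
    finally show ?thesis .
  qed
  obtain m where m: "j = k + m" using kj le_Suc_ex by blast
  have h3: "real n ^ k * (d / real n) ^ j \<le> d ^ j * real k ^ k / real k ^ j"
  proof -
    have "real n ^ k * (d / real n) ^ j = d ^ j / real n ^ m"
      using n0 by (simp add: m power_add power_divide)
    also have "\<dots> \<le> d ^ j / real k ^ m"
      using k1 d0 kn by (intro divide_left_mono power_mono mult_pos_pos) auto
    also have "\<dots> = d ^ j * real k ^ k / real k ^ j"
      using k1 by (simp add: m power_add field_simps)
    finally show ?thesis .
  qed
  have "real (n choose k) * real ((k choose 2) choose j) * (d / real n) ^ j
        \<le> (real n ^ k / fact k) * ((real k ^ 2 / 2) ^ j / fact j) * (d / real n) ^ j"
    using h1 h2 d0 by (intro mult_right_mono mult_mono) auto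
  also have "\<dots> = (real n ^ k * (d / real n) ^ j) * (real k ^ 2 / 2) ^ j / (fact k * fact j)"
    by simp
  also have "\<dots> \<le> (d ^ j * real k ^ k / real k ^ j) * (real k ^ 2 / 2) ^ j / (fact k * fact j)"
    using h3 by (intro divide_right_mono mult_right_mono) auto
  also have "\<dots> = (real k ^ k / fact k) * ((d * real k / 2) ^ j / fact j)"
  proof -
    have e1: "(real k ^ 2 / 2) ^ j = real k ^ j * real k ^ j / 2 ^ j"
      by (simp add: power2_eq_square power_mult_distrib power_divide)
    have e2: "(d * real k / 2) ^ j = d ^ j * real k ^ j / 2 ^ j"
      by (simp add: power_mult_distrib power_divide)
    have aux: "(D * K / x) * (x * x / T) / (F1 * F2) = (K / F1) * ((D * x / T) / F2)"
      if "x \<noteq> 0" "T \<noteq> 0" "F1 \<noteq> 0" "F2 \<noteq> 0" for D K x T F1 F2 :: real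
      using that by (simp add: field_simps)
    have "real k ^ j \<noteq> 0" using k1 by simp
    from aux[OF this, of "2 ^ j" "fact k" "fact j" "d ^ j" "real k ^ k"]
    show ?thesis unfolding e1 e2 by simp
  qed
  also have "\<dots> \<le> exp (real k) * exp (d * real k / 2)"
    using d0 by (intro mult_mono exp_term_le) auto
  finally show ?thesis .
qed


theorem mainTheorem11:
  fixes d :: real
  assumes "d \<ge> 0"
  shows "\<exists>\<beta>::real. \<forall>(n::nat) (k::nat) (\<delta>::real).
           n \<ge> 1 \<longrightarrow> real n \<ge> d \<longrightarrow> k \<ge> 2 \<longrightarrow>
           \<delta> \<ge> 1 + 1 / ln (real k) \<longrightarrow> \<delta> * real k \<in> \<int> \<longrightarrow>
           measure_pmf.prob (gnp n (d / real n))
             {E. real (s_count n E k (nat \<lfloor>\<delta> * real k\<rfloor>)) \<ge> \<beta> ^ k}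
           \<le> 1 / 2 ^ k"
proof -
  define a where "a = exp (1 + d / 2)"
  have a0: "a > 0" unfolding a_def by simp
  show ?thesis
  proof (rule exI[of _ "2 * a"], intro allI impI)
  fix n k :: nat and \<delta> :: real
  assume n1: "n \<ge> 1" and dn: "real n \<ge> d" and k2: "k \<ge> 2"
    and del: "\<delta> \<ge> 1 + 1 / ln (real k)" and "\<delta> * real k \<in> \<int>"
  define j where "j = nat \<lfloor>\<delta> * real k\<rfloor>"
  define p where "p = d / real n"
  define M where "M = gnp n p"
  define S where "S = Sset n k j"
  define c where "c = (2 * a) ^ k"
  have c0: "c > 0" unfolding c_def using a0 by simp
  have p01: "0 \<le> p" "p \<le> 1" unfolding p_def using assms dn n1 by auto
  have "ln (real k) > 0" using k2 by simp
  hence "\<delta> \<ge> 1" using del by (smt (verit) divide_pos_pos)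
  hence "\<delta> * real k \<ge> real k" using k2 by simp
  hence kj: "k \<le> j" unfolding j_def by linarith
  define Y where "Y = (\<lambda>E. \<Sum>x\<in>S. indicator {E. snd x \<subseteq> E} E :: real)"
  have sY: "real (s_count n E k j) \<le> Y E" if "E \<in> set_pmf M" for E
  proof -
    have Eall: "E \<subseteq> all_pairs n" using that set_gnp unfolding M_def by blast
    have fin: "finite (subgraphs_kj n E k j)" using sub_eq[OF Eall] finite_Sset[of n k j] by simp
    have "s_count n E k j \<le> card (subgraphs_kj n E k j)"
      unfolding s_count_def by (rule card_quotient_le'[OF fin])
    also have "\<dots> = card {x \<in> S. snd x \<subseteq> E}" using sub_eq[OF Eall] unfolding S_def by simp
    finally have "real (s_count n E k j) \<le> real (card {x \<in> S. snd x \<subseteq> E})" by simp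
    also have "real (card {x \<in> S. snd x \<subseteq> E}) = Y E"
      unfolding Y_def using finite_Sset[of n k j] unfolding S_def
      by (simp add: indicator_def sum.If_cases Int_def)
    finally show ?thesis .
  qed
  have finM: "finite (set_pmf M)"
    by (rule finite_subset[of _ "Pow (all_pairs n)"]) (use set_gnp finite_all_pairs in \<open>auto simp: M_def\<close>)
  have intY: "integrable (measure_pmf M) Y"
    by (rule integrable_measure_pmf_finite[OF finM])
  have EY: "(\<integral>E. Y E \<partial>measure_pmf M) = real (card S) * p ^ j"
  proof -
    have "(\<integral>E. Y E \<partial>measure_pmf M) = (\<Sum>x\<in>S. measure_pmf.prob M {E. snd x \<subseteq> E})"
      unfolding Y_def by (subst Bochner_Integration.integral_sum) (auto intro: integrable_measure_pmf_finite[OF finM])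
    also have "\<dots> = (\<Sum>x\<in>S. p ^ j)"
    proof (intro sum.cong refl)
      fix x assume "x \<in> S"
      then obtain W F where x: "x = (W, F)" "W \<subseteq> {1..n}" "F \<subseteq> {e. e \<subseteq> W \<and> card e = 2}" "card F = j"
        unfolding S_def Sset_def by auto
      have "F \<subseteq> all_pairs n" using x unfolding all_pairs_def by auto
      thus "measure_pmf.prob M {E. snd x \<subseteq> E} = p ^ j"
        using prob_sub[OF _ p01] x unfolding M_def by simp
    qed
    finally show ?thesis by simp
  qed
  have "measure_pmf.prob M {E. c \<le> real (s_count n E k j)} \<le> measure_pmf.prob M {E. c \<le> Y E}"
    by (rule measure_pmf.finite_measure_mono_AE)
       (use sY in \<open>auto simp: AE_measure_pmf_iff intro: order.trans\<close>)
  also have "\<dots> \<le> (\<integral>E. Y E \<partial>measure_pmf M) / c"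
    using integral_Markov_inequality_measure[OF intY _ _ c0, of UNIV]
    by (auto simp: Y_def sum_nonneg)
  also have "\<dots> \<le> 1 / 2 ^ k"
  proof -
    have "real (card S) * p ^ j \<le> a ^ k"
    proof (cases "k \<le> n")
      case True
      have "real (card S) * p ^ j \<le> exp (real k) * exp (d * real k / 2)"
        using main_ineq[OF True kj assms dn] k2 unfolding S_def card_Sset p_def by simp
      also have "\<dots> = exp (real k * (1 + d / 2))"
        by (simp add: exp_add[symmetric] algebra_simps)
      also have "\<dots> = a ^ k" unfolding a_def by (rule exp_of_nat_mult)
      finally show ?thesis .
    next
      case False
      hence "n choose k = 0" by simp
      hence "real (card S) = 0" unfolding S_def card_Sset by simp
      thus ?thesis using a0 by simp
    qed
    hence "(real (card S) * p ^ j) / c \<le> a ^ k / c" using c0 by (simp add: divide_right_mono)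
    also have "\<dots> = 1 / 2 ^ k" unfolding c_def using a0 by (simp add: power_mult_distrib)
    finally show ?thesis using EY by simp
  qed
  finally show "measure_pmf.prob (gnp n (d / real n))
             {E. real (s_count n E k (nat \<lfloor>\<delta> * real k\<rfloor>)) \<ge> (2 * a) ^ k} \<le> 1 / 2 ^ k"
    unfolding M_def p_def c_def j_def .
  qed
qed

end
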